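(* Let $p,q$ be distinct primes and $n\geqslant m\geqslant2$ with $n+m$ even. Then there exists a set of non-identity arrows of $C_{p^nq^m}$ which is a minimal generating set of the transfer system it generates and whose cardinality is $|R_{(n+m)/2}|+2$.
   Context: For a finite group $G$, an arrow is a pair $(H,K)$ of subgroups with $H\leqslant K$; identity arrows are those with $H=K$. A $G$-transfer system is a set of arrows containing all identities and closed under composition ($(H,K),(K,L)\Rightarrow(H,L)$), conjugation ($(H,K)\Rightarrow(gHg^{-1},gKg^{-1})$) and restriction ($(H,K)$ and $L\leqslant K\Rightarrow(H\cap L,L)$). For a set $S$ of non-identity arrows, $\langle S\rangle$ is the smallest transfer system containing $S$; $S$ is a minimal generating set of $\langle S\rangle$ if $\langle S\setminus\{s\}\rangle\neq\langle S\rangle$ for all $s\in S$. In $C_{p^nq^m}$ let $C_{p^aq^x}$ be the unique subgroup of order $p^aq^x$, and write $(a,x;b,y)$ for the arrow $(C_{p^aq^x},C_{p^bq^y})$ with $a\leqslant b$, $x\leqslant y$. Its midpoint is $(a+x+b+y)/2$. For a half-integer or integer $M$, $R_M$ is the set of all non-identity arrows of $C_{p^nq^m}$ with midpoint $M$. *)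

theory Defs
  imports "HOL-Algebra.Algebra" "HOL-Computational_Algebra.Primes"
begin

definition arrows :: "('a, 'b) monoid_scheme \<Rightarrow> ('a set \<times> 'a set) set" where
  "arrows G = {(H, K). subgroup H G \<and> subgroup K G \<and> H \<subseteq> K}"

definition conjset :: "('a, 'b) monoid_scheme \<Rightarrow> 'a \<Rightarrow> 'a set \<Rightarrow> 'a set" where
  "conjset G g H = (g <#\<^bsub>G\<^esub> H) #>\<^bsub>G\<^esub> inv\<^bsub>G\<^esub> g"

definition is_transfer_system :: "('a, 'b) monoid_scheme \<Rightarrow> ('a set \<times> 'a set) set \<Rightarrow> bool" where
  "is_transfer_system G T \<longleftrightarrow>
     T \<subseteq> arrows G \<and>
     (\<forall>H. subgroup H G \<longrightarrow> (H, H) \<in> T) \<and>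
     (\<forall>H K L. (H, K) \<in> T \<and> (K, L) \<in> T \<longrightarrow> (H, L) \<in> T) \<and>
     (\<forall>H K g. (H, K) \<in> T \<and> g \<in> carrier G \<longrightarrow> (conjset G g H, conjset G g K) \<in> T) \<and>
     (\<forall>H K L. (H, K) \<in> T \<and> subgroup L G \<and> L \<subseteq> K \<longrightarrow> (H \<inter> L, L) \<in> T)"

definition generated_ts :: "('a, 'b) monoid_scheme \<Rightarrow> ('a set \<times> 'a set) set \<Rightarrow> ('a set \<times> 'a set) set" where
  "generated_ts G S = \<Inter> {T. is_transfer_system G T \<and> S \<subseteq> T}"

definition minimal_generating_set :: "('a, 'b) monoid_scheme \<Rightarrow> ('a set \<times> 'a set) set \<Rightarrow> bool" where
  "minimal_generating_set G S \<longleftrightarrow>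
     (\<forall>s\<in>S. generated_ts G (S - {s}) \<noteq> generated_ts G S)"

definition Cpq :: "nat \<Rightarrow> nat \<Rightarrow> nat \<Rightarrow> nat \<Rightarrow> int monoid" where
  "Cpq p q n m = integer_mod_group (p ^ n * q ^ m)"

text \<open>Twice the midpoint of an arrow (H,K) = (C_{p^a q^x}, C_{p^b q^y}): a + x + b + y,
  where the exponents are read off from the subgroup orders.\<close>
definition twice_midpoint :: "nat \<Rightarrow> nat \<Rightarrow> 'a set \<times> 'a set \<Rightarrow> nat" where
  "twice_midpoint p q A = (case A of (H, K) \<Rightarrow>
      multiplicity p (card H) + multiplicity q (card H) +
      multiplicity p (card K) + multiplicity q (card K))"

text \<open>R_M for M = k/2: all non-identity arrows of C_{p^n q^m} with midpoint k/2.\<close>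
definition R_mid :: "nat \<Rightarrow> nat \<Rightarrow> nat \<Rightarrow> nat \<Rightarrow> nat \<Rightarrow> (int set \<times> int set) set" where
  "R_mid p q n m k = {(H, K) \<in> arrows (Cpq p q n m). H \<noteq> K \<and> twice_midpoint p q (H, K) = k}"

end

theory Submission
  imports Defs
begin


lemma conjset_comm:
  assumes "comm_group G" "H \<subseteq> carrier G" "g \<in> carrier G"
  shows "conjset G g H = H"
proof -
  interpret comm_group G by fact
  have eq: "g \<otimes>\<^bsub>G\<^esub> h \<otimes>\<^bsub>G\<^esub> inv\<^bsub>G\<^esub> g = h" if "h \<in> H" for h
  proof -
    have h: "h \<in> carrier G" using that assms(2) by blast
    have "g \<otimes>\<^bsub>G\<^esub> h = h \<otimes>\<^bsub>G\<^esub> g" using assms(3) h by (rule m_comm)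
    then have "g \<otimes>\<^bsub>G\<^esub> h \<otimes>\<^bsub>G\<^esub> inv\<^bsub>G\<^esub> g = h \<otimes>\<^bsub>G\<^esub> g \<otimes>\<^bsub>G\<^esub> inv\<^bsub>G\<^esub> g" by simp
    also have "\<dots> = h \<otimes>\<^bsub>G\<^esub> (g \<otimes>\<^bsub>G\<^esub> inv\<^bsub>G\<^esub> g)" using h assms(3) by (intro m_assoc) auto
    also have "\<dots> = h" using h assms(3) by simp
    finally show ?thesis .
  qed
  have "conjset G g H = (\<lambda>h. g \<otimes>\<^bsub>G\<^esub> h \<otimes>\<^bsub>G\<^esub> inv\<^bsub>G\<^esub> g) ` H"
    unfolding conjset_def l_coset_def r_coset_def by blast
  also have "\<dots> = H" using eq by force
  finally show ?thesis .
qed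
lemma subgroup_imod:
  fixes N :: nat assumes N: "N > 0" and H: "subgroup H (integer_mod_group N)"
  shows "\<exists>g::nat. g > 0 \<and> g dvd N \<and> H = {z \<in> {0..<int N}. int g dvd z}"
proof -
  let ?G = "integer_mod_group N"
  interpret group ?G by simp
  have car: "carrier ?G = {0..<int N}" using N by (simp add: carrier_integer_mod_group)
  have sub: "H \<subseteq> {0..<int N}" using subgroup.subset[OF H] car by simp
  have zero: "0 \<in> H" using subgroup.one_closed[OF H] by simp
  have mulc: "(c * x) mod int N \<in> H" if "x \<in> H" for x c
    using subgroup_int_pow_closed[OF H that, of c] by (simp add: int_pow_integer_mod_group)
  have addc: "(x + y) mod int N \<in> H" if "x \<in> H" "y \<in> H" for x y
    using subgroup.m_closed[OF H that] by simp
  show ?thesis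
  proof (cases "{z \<in> H. z > 0} = {}")
    case True
    have "H = {0}" using True sub zero by force
    moreover have "{z \<in> {0..<int N}. int N dvd z} = {0}"
      using N by (auto simp: zdvd_imp_le dest: zdvd_imp_le)
    ultimately have "0 < N \<and> N dvd N \<and> H = {z \<in> {0..<int N}. int N dvd z}" using N by simp
    then show ?thesis by blast
  next
    case False
    define P where "P = {z \<in> H. z > 0}"
    have finP: "finite P" 
    proof (rule finite_subset)
      show "P \<subseteq> {0..<int N}" using sub unfolding P_def by blast
    qed simp
    define g0 where "g0 = Min P"
    have g0P: "g0 \<in> P" using False finP unfolding g0_def P_def by (intro Min_in) auto
    have g0min: "g0 \<le> z" if "z \<in> H" "z > 0" for z using finP that unfolding g0_def P_def by auto
    have g0pos: "g0 > 0" and g0H: "g0 \<in> H" using g0P unfolding P_def by auto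
    have g0N: "g0 < int N" using g0H sub by auto
    have modH: "x mod g0 \<in> H" if "x \<in> H \<or> x = int N" for x
    proof -
      have "(x + (- (x div g0)) * g0) mod int N \<in> H"
      proof (cases "x \<in> H")
        case True then show ?thesis using addc[OF True mulc[OF g0H, of "- (x div g0)"]] by (simp add: mod_add_right_eq)
      next
        case False then have "x = int N" using that by auto
        then show ?thesis using mulc[OF g0H, of "- (x div g0)"] by (simp add: mod_add_self1)
      qed
      moreover have "x + (- (x div g0)) * g0 = x mod g0" by (simp add: minus_div_mult_eq_mod[symmetric])
      moreover have "(x mod g0) mod int N = x mod g0"
        
      proof (rule mod_pos_pos_trivial)
        show "0 \<le> x mod g0" using g0pos by simp
        show "x mod g0 < int N" using g0pos g0N by (meson less_trans pos_mod_bound)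
      qed
      ultimately show ?thesis by simp
    qed
    have dvdH: "g0 dvd x" if "x \<in> H \<or> x = int N" for x
    proof (rule ccontr)
      assume "\<not> g0 dvd x"
      then have "x mod g0 > 0" using g0pos
        by (metis dvd_eq_mod_eq_0 order_less_le pos_mod_sign)
      then have "g0 \<le> x mod g0" using g0min modH[OF that] by auto
      moreover have "x mod g0 < g0" using g0pos by simp
      ultimately show False by simp
    qed
    define g where "g = nat g0"
    have gg: "int g = g0" using g0pos unfolding g_def by simp
    have "H = {z \<in> {0..<int N}. int g dvd z}"
    proof
      show "H \<subseteq> {z \<in> {0..<int N}. int g dvd z}" using sub dvdH gg by auto
      show "{z \<in> {0..<int N}. int g dvd z} \<subseteq> H"
      proof
        fix z assume "z \<in> {z \<in> {0..<int N}. int g dvd z}"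
        then have z0: "0 \<le> z" "z < int N" "g0 dvd z" using gg by auto
        then obtain c where "z = g0 * c" by (auto elim: dvdE)
        then have z: "z = c * g0" "0 \<le> z" "z < int N" using z0 by (auto simp: mult.commute)
        have "(c * g0) mod int N \<in> H" using mulc[OF g0H] by simp
        then show "z \<in> H" using z by simp
      qed
    qed
    moreover have "g dvd N" using dvdH[of "int N"] gg by (metis int_dvd_int_iff)
    moreover have "g > 0" using g0pos g_def by simp
    ultimately show ?thesis by blast
  qed
qed

lemma card_multiples:
  fixes N g :: nat assumes "g > 0" "g dvd N"
  shows "card {z \<in> {0..<int N}. int g dvd z} = N div g"
proof -
  obtain c where c: "N = g * c" using assms by (auto elim!: dvdE)
  have "{z \<in> {0..<int N}. int g dvd z} = (\<lambda>j. int g * j) ` {0..<int c}"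
  proof (auto simp: c)
    fix z :: int assume "0 \<le> z" "z < int g * int c" "int g dvd z"
    then obtain j where j: "z = int g * j" by (auto elim!: dvdE)
    then have "0 \<le> j" "j < int c" using assms `0 \<le> z` `z < int g * int c`
      by (auto simp: zero_le_mult_iff mult_less_cancel_left)
    then show "z \<in> (*) (int g) ` {0..<int c}" using j by auto
  next
    fix j :: int assume "0 \<le> j" "j < int c"
    then show "int g * j < int g * int c" using assms by simp
  qed
  moreover have "inj_on (\<lambda>j. int g * j) {0..<int c}" using assms by (auto simp: inj_on_def)
  ultimately show ?thesis using assms c by (simp add: card_image)
qed




definition Qg :: "(nat \<Rightarrow> nat \<Rightarrow> nat \<Rightarrow> nat \<Rightarrow> bool) \<Rightarrow> (nat \<Rightarrow> nat \<Rightarrow> nat \<Rightarrow> nat \<Rightarrow> bool) \<Rightarrow>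
   (nat \<Rightarrow> nat \<Rightarrow> nat \<Rightarrow> nat \<Rightarrow> bool) \<Rightarrow> nat \<Rightarrow> nat \<Rightarrow> nat \<Rightarrow> nat \<Rightarrow> nat \<Rightarrow> bool" where
  "Qg Xp Yp Zp L a x b y \<longleftrightarrow> (a = b \<and> x = y) \<or> (a + x + b + y < L \<and> \<not> Xp a x b y) \<or>
      (a + x + b + y = L \<and> \<not> Yp a x b y) \<or> (a + x + b + y = L + 1 \<and> Zp a x b y)"

lemma Qg_refl: "Qg Xp Yp Zp L a x a x" by (simp add: Qg_def)

lemma W_comp:
  fixes a b c x y z :: nat
  assumes "a \<le> b" "b \<le> c" "x \<le> y" "y \<le> z" "a \<noteq> b \<or> x \<noteq> y" "b \<noteq> c \<or> y \<noteq> z"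
  shows "a + x + b + y < a + x + c + z" "a + x + c + z < b + y + c + z"
proof -
  have "b < c \<or> y < z" using assms(2,4,6) by auto
  then show "a + x + b + y < a + x + c + z" using assms(2,4) by linarith
  have "a < b \<or> x < y" using assms(1,3,5) by auto
  then show "a + x + c + z < b + y + c + z" using assms(1,3) by linarith
qed

lemma W_restr:
  fixes a b c x y z :: nat
  assumes "c \<le> b" "z \<le> y" "c \<noteq> b \<or> z \<noteq> y"
  shows "min a c + min x z + c + z < a + x + b + y"
proof -
  have "c < b \<or> z < y" using assms by auto
  moreover have "min a c \<le> a" "min x z \<le> x" by auto
  ultimately show ?thesis using assms by linarith
qed

lemma Qg_comp:
  assumes ord: "a \<le> b" "b \<le> c" "x \<le> y" "y \<le> z" and bx: "c \<le> nn" "z \<le> mm"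
    and q1: "Qg Xp Yp Zp L a x b y" and q2: "Qg Xp Yp Zp L b y c z"
    and CX: "\<And>a x b y c z. a \<le> b \<Longrightarrow> b \<le> c \<Longrightarrow> x \<le> y \<Longrightarrow> y \<le> z \<Longrightarrow> c \<le> nn \<Longrightarrow> z \<le> mm \<Longrightarrow>
       a \<noteq> b \<or> x \<noteq> y \<Longrightarrow> b \<noteq> c \<or> y \<noteq> z \<Longrightarrow> Qg Xp Yp Zp L a x b y \<Longrightarrow> Qg Xp Yp Zp L b y c z \<Longrightarrow>
       a + x + c + z < L \<Longrightarrow> Xp a x c z \<Longrightarrow> False"
    and CY: "\<And>a x b y c z. a \<le> b \<Longrightarrow> b \<le> c \<Longrightarrow> x \<le> y \<Longrightarrow> y \<le> z \<Longrightarrow> c \<le> nn \<Longrightarrow> z \<le> mm \<Longrightarrow>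
       a \<noteq> b \<or> x \<noteq> y \<Longrightarrow> b \<noteq> c \<or> y \<noteq> z \<Longrightarrow> a + x + b + y < L \<Longrightarrow> \<not> Xp a x b y \<Longrightarrow>
       b + y + c + z = L + 1 \<Longrightarrow> Zp b y c z \<Longrightarrow>
       a + x + c + z = L \<Longrightarrow> Yp a x c z \<Longrightarrow> False"
  shows "Qg Xp Yp Zp L a x c z"
proof (cases "a = b \<and> x = y")
  case True then show ?thesis using q2 by simp
next
  assume n1: "\<not> (a = b \<and> x = y)"
  show ?thesis
  proof (cases "b = c \<and> y = z")
    case True then show ?thesis using q1 by simp
  next
    assume n2: "\<not> (b = c \<and> y = z)"
    have w: "a + x + b + y < a + x + c + z" "a + x + c + z < b + y + c + z"
      using W_comp[OF ord] n1 n2 by auto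
    have w2: "b + y + c + z \<le> L + 1" using q2 n2 unfolding Qg_def by auto
    show ?thesis
    proof (cases "a + x + c + z < L")
        case True
      then have "\<not> Xp a x c z" using CX[OF ord bx _ _ q1 q2] n1 n2 by blast
      then show ?thesis using True unfolding Qg_def by blast
    next
      case False
      then have eqL: "a + x + c + z = L" using w w2 by linarith
      then have "b + y + c + z = L + 1" using w w2 by linarith
      then have z2: "Zp b y c z" using q2 n2 unfolding Qg_def by auto
      have l1: "a + x + b + y < L" using w eqL by linarith
      then have "\<not> Xp a x b y" using q1 n1 unfolding Qg_def by auto
      then have "\<not> Yp a x c z" using CY[OF ord bx _ _ l1 _ _ z2 eqL] n1 n2 w w2 eqL by fastforce
      then show ?thesis using eqL unfolding Qg_def by blast
    qed
  qed
qed

lemma Qg_restr: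
  assumes ord: "a \<le> b" "x \<le> y" "c \<le> b" "z \<le> y" and bx: "b \<le> nn" "y \<le> mm"
    and q1: "Qg Xp Yp Zp L a x b y"
    and RX: "\<And>a x b y c z. a \<le> b \<Longrightarrow> x \<le> y \<Longrightarrow> c \<le> b \<Longrightarrow> z \<le> y \<Longrightarrow> b \<le> nn \<Longrightarrow> y \<le> mm \<Longrightarrow> c \<noteq> b \<or> z \<noteq> y \<Longrightarrow>
       a \<noteq> b \<or> x \<noteq> y \<Longrightarrow> min a c \<noteq> c \<or> min x z \<noteq> z \<Longrightarrow> Qg Xp Yp Zp L a x b y \<Longrightarrow>
       min a c + min x z + c + z < L \<Longrightarrow> Xp (min a c) (min x z) c z \<Longrightarrow> False"
    and RY: "\<And>a x b y c z. a \<le> b \<Longrightarrow> x \<le> y \<Longrightarrow> c \<le> b \<Longrightarrow> z \<le> y \<Longrightarrow> b \<le> nn \<Longrightarrow> y \<le> mm \<Longrightarrow> c \<noteq> b \<or> z \<noteq> y \<Longrightarrow>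
       min a c \<noteq> c \<or> min x z \<noteq> z \<Longrightarrow> a + x + b + y = L + 1 \<Longrightarrow> Zp a x b y \<Longrightarrow>
       min a c + min x z + c + z = L \<Longrightarrow> Yp (min a c) (min x z) c z \<Longrightarrow> False"
  shows "Qg Xp Yp Zp L (min a c) (min x z) c z"
proof (cases "c = b \<and> z = y")
  case True then show ?thesis using q1 ord by (simp add: min_def)
next
  assume n1: "\<not> (c = b \<and> z = y)"
  show ?thesis
  proof (cases "min a c = c \<and> min x z = z")
    case True then show ?thesis unfolding Qg_def by simp
  next
    assume n2: "\<not> (min a c = c \<and> min x z = z)"
    have n0: "a \<noteq> b \<or> x \<noteq> y"
    proof (rule ccontr)
      assume "\<not> (a \<noteq> b \<or> x \<noteq> y)"
      then have "min a c = c \<and> min x z = z" using ord by (simp add: min_def)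
      then show False using n2 by simp
    qed
    have w: "min a c + min x z + c + z < a + x + b + y" using W_restr[of c b z y a x] ord n1 by blast
    have w2: "a + x + b + y \<le> L + 1" using q1 n0 unfolding Qg_def by auto
    show ?thesis
    proof (cases "min a c + min x z + c + z < L")
      case True
      then have "\<not> Xp (min a c) (min x z) c z" using RX[OF ord bx _ n0 _ q1] n1 n2 by blast
      then show ?thesis using True unfolding Qg_def by blast
    next
      case False
      then have eqL: "min a c + min x z + c + z = L" using w w2 by linarith
      then have "a + x + b + y = L + 1" using w w2 by linarith
      moreover then have "Zp a x b y" using q1 n0 unfolding Qg_def by auto
      ultimately have "\<not> Yp (min a c) (min x z) c z" using RY[OF ord bx _ _ _ _ eqL] n1 n2 by blast
      then show ?thesis using eqL unfolding Qg_def by blast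
    qed
  qed
qed


definition isE :: "nat \<Rightarrow> nat \<Rightarrow> nat \<Rightarrow> nat \<Rightarrow> nat \<Rightarrow> nat \<Rightarrow> nat \<Rightarrow> bool" where
  "isE m M k a x b y \<longleftrightarrow> (a = k \<and> x = m \<and> b = k + 1 \<and> y = m) \<or> (a = M \<and> x = 0 \<and> b = M \<and> y = 1)
      \<or> (a = M \<and> x = 0 \<and> b = M + 1 \<and> y = 0)"

definition PS :: "nat \<Rightarrow> nat \<Rightarrow> nat \<Rightarrow> nat \<Rightarrow> nat \<Rightarrow> nat \<Rightarrow> nat \<Rightarrow> nat \<Rightarrow> bool" where
  "PS n m M k a x b y \<longleftrightarrow> ((a \<noteq> b \<or> x \<noteq> y) \<and> a + x + b + y = 2 * M \<and>
      \<not> (M < n \<and> a + 1 = M \<and> x = 0 \<and> b = M \<and> y = 1)) \<or> isE m M k a x b y"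

definition Xs :: "nat \<Rightarrow> nat \<Rightarrow> nat \<Rightarrow> nat \<Rightarrow> nat \<Rightarrow> nat \<Rightarrow> nat \<Rightarrow> nat \<Rightarrow> nat \<Rightarrow> nat \<Rightarrow> nat \<Rightarrow> bool" where
  "Xs m M k a0 x0 b0 y0 a x b y \<longleftrightarrow>
     (b0 = k + 1 \<and> y0 = m \<and> a0 \<le> k \<and> a = a0 \<and> x = x0 \<and> b = k \<and> y = m) \<or>
     (a0 + 1 = M \<and> x0 = 0 \<and> ((b0 = M \<and> y0 = 1) \<or> (b0 = M + 1 \<and> y0 = 0)) \<and> a + 1 = M \<and> x = 0 \<and> b = M \<and> y = 0)"

definition Ys :: "nat \<Rightarrow> nat \<Rightarrow> nat \<Rightarrow> nat \<Rightarrow> nat \<Rightarrow> nat \<Rightarrow> nat \<Rightarrow> nat \<Rightarrow> nat \<Rightarrow> nat \<Rightarrow> nat \<Rightarrow> bool" where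
  "Ys m M k a0 x0 b0 y0 a x b y \<longleftrightarrow> (a = a0 \<and> x = x0 \<and> b = b0 \<and> y = y0) \<or>
     (a0 + 1 = M \<and> x0 = 0 \<and> ((b0 = M \<and> y0 = 1) \<or> (b0 = M + 1 \<and> y0 = 0)) \<and> a + 1 = M \<and> x = 0 \<and> b = M \<and> y = 1)"

definition Qs :: "nat \<Rightarrow> nat \<Rightarrow> nat \<Rightarrow> nat \<Rightarrow> nat \<Rightarrow> nat \<Rightarrow> nat \<Rightarrow> nat \<Rightarrow> nat \<Rightarrow> nat \<Rightarrow> nat \<Rightarrow> bool" where
  "Qs m M k a0 x0 b0 y0 = (if isE m M k a0 x0 b0 y0
     then Qg (\<lambda>_ _ _ _. False) (\<lambda>_ _ _ _. False) (\<lambda>a x b y. isE m M k a x b y \<and> \<not> (a = a0 \<and> x = x0 \<and> b = b0 \<and> y = y0)) (2 * M)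
     else Qg (Xs m M k a0 x0 b0 y0) (Ys m M k a0 x0 b0 y0) (isE m M k) (2 * M))"

definition LTn :: "nat \<Rightarrow> nat \<Rightarrow> (nat \<Rightarrow> nat \<Rightarrow> nat \<Rightarrow> nat \<Rightarrow> bool) \<Rightarrow> (nat \<times> nat \<times> nat \<times> nat) set" where
  "LTn n m P = {(a, x, b, y). a \<le> b \<and> b \<le> n \<and> x \<le> y \<and> y \<le> m \<and> P a x b y}"

lemma finite_LTn: "finite (LTn n m P)"
proof (rule finite_subset)
  show "LTn n m P \<subseteq> {0..n} \<times> {0..m} \<times> {0..n} \<times> {0..m}" unfolding LTn_def by auto
qed simp

definition PR :: "nat \<Rightarrow> nat \<Rightarrow> nat \<Rightarrow> nat \<Rightarrow> nat \<Rightarrow> bool" where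
  "PR M a x b y \<longleftrightarrow> (a \<noteq> b \<or> x \<noteq> y) \<and> a + x + b + y = 2 * M"

locale latt =
  fixes n m M k :: nat
  assumes nm: "n + m = 2 * M" and nk: "n = m + 2 * k" and m2: "2 \<le> m"
begin

lemma isE_W: "isE m M k a x b y \<Longrightarrow> a + x + b + y = 2 * M + 1"
  using nm nk unfolding isE_def by auto

lemma QE_comp:
  assumes "a \<le> b" "b \<le> c" "x \<le> y" "y \<le> z" "c \<le> n" "z \<le> m"
    and "isE m M k a0 x0 b0 y0"
    and "Qs m M k a0 x0 b0 y0 a x b y" "Qs m M k a0 x0 b0 y0 b y c z"
  shows "Qs m M k a0 x0 b0 y0 a x c z"
  using assms unfolding Qs_def by (simp add: Qg_comp)

lemma QE_restr:
  assumes "a \<le> b" "x \<le> y" "c \<le> b" "z \<le> y" "b \<le> n" "y \<le> m"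
    and "isE m M k a0 x0 b0 y0"
    and "Qs m M k a0 x0 b0 y0 a x b y"
  shows "Qs m M k a0 x0 b0 y0 (min a c) (min x z) c z"
  using assms unfolding Qs_def by (simp add: Qg_restr)


lemma QR_comp:
  assumes ord: "a \<le> b" "b \<le> c" "x \<le> y" "y \<le> z" "c \<le> n" "z \<le> m"
    and ps: "PS n m M k a0 x0 b0 y0" and ne: "\<not> isE m M k a0 x0 b0 y0"
    and q1: "Qs m M k a0 x0 b0 y0 a x b y" and q2: "Qs m M k a0 x0 b0 y0 b y c z"
  shows "Qs m M k a0 x0 b0 y0 a x c z"
proof -
  have s: "a0 + x0 + b0 + y0 = 2 * M" "a0 \<noteq> b0 \<or> x0 \<noteq> y0" "\<not> (M < n \<and> a0 + 1 = M \<and> x0 = 0 \<and> b0 = M \<and> y0 = 1)"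
    using ps ne unfolding PS_def by auto
  have "Qg (Xs m M k a0 x0 b0 y0) (Ys m M k a0 x0 b0 y0) (isE m M k) (2 * M) a x c z"
  proof (rule Qg_comp[OF ord])
    show "Qg (Xs m M k a0 x0 b0 y0) (Ys m M k a0 x0 b0 y0) (isE m M k) (2 * M) a x b y" using q1 ne unfolding Qs_def by simp
    show "Qg (Xs m M k a0 x0 b0 y0) (Ys m M k a0 x0 b0 y0) (isE m M k) (2 * M) b y c z" using q2 ne unfolding Qs_def by simp
  next
    fix a x b y c z
    assume h: "a \<le> b" "b \<le> c" "x \<le> y" "y \<le> z" "c \<le> n" "z \<le> m" "a \<noteq> b \<or> x \<noteq> y" "b \<noteq> c \<or> y \<noteq> z"
      "a + x + c + z < 2 * M" "Xs m M k a0 x0 b0 y0 a x c z"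
    have w: "a + x < b + y" "b + y < c + z" using h by auto
    show False using h(10) w s nm nk m2 unfolding Xs_def by auto
  next
    fix a x b y c z
    assume h: "a \<le> b" "b \<le> c" "x \<le> y" "y \<le> z" "c \<le> n" "z \<le> m" "a \<noteq> b \<or> x \<noteq> y" "b \<noteq> c \<or> y \<noteq> z"
      "a + x + b + y < 2 * M" "\<not> Xs m M k a0 x0 b0 y0 a x b y" "b + y + c + z = 2 * M + 1" "isE m M k b y c z"
      "a + x + c + z = 2 * M" "Ys m M k a0 x0 b0 y0 a x c z"
    show False using h s nm nk m2 unfolding Xs_def Ys_def isE_def by auto
  qed
  then show ?thesis using ne unfolding Qs_def by simp
qed


lemma Mk: "M = m + k" using nm nk by simp

lemma RY_gen:
  assumes h: "c \<le> b" "z \<le> y" "c \<noteq> b \<or> z \<noteq> y"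
      "min a c \<noteq> c \<or> min x z \<noteq> z" "isE m M k a x b y"
      "min a c + min x z + c + z = 2 * M"
  shows False
proof -
  consider (A) "a = k" "x = m" "b = k + 1" "y = m" | (B) "a = M" "x = 0" "b = M" "y = 1" | (C) "a = M" "x = 0" "b = M + 1" "y = 0"
    using h(5) unfolding isE_def by blast
  then show False
  proof cases
    case A
    show False
    proof (cases "c = k + 1")
      case True
      then have "min a c = k" "min x z = z" using A h by auto
      then show False using h(6) True Mk by presburger
    next
      case False
      then have "c \<le> k" using h A by auto
      then have "min a c = c" "min x z = z" using A h by auto
      then show False using h(4,6) `c \<le> k` A Mk by auto
    qed
  next
    case B
    then have "min a c = c" "min x z = 0" using h by auto
    then show False using h B by presburger
  next
    case C
    then have "min a c = c" "min x z = 0" "z = 0" using h by auto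
    then show False using h C by auto
  qed
qed

lemma RX_al:
  assumes h: "a \<le> b" "x \<le> y" "c \<le> b" "z \<le> y" "b \<le> n" "y \<le> m" "c \<noteq> b \<or> z \<noteq> y"
      "a \<noteq> b \<or> x \<noteq> y"
      "Qg (Xs m M k a0 x0 b0 y0) (Ys m M k a0 x0 b0 y0) (isE m M k) (2 * M) a x b y"
      "min a c + min x z + c + z < a + x + b + y"
    and al: "b0 = k + 1" "y0 = m" "a0 \<le> k" "min a c = a0" "min x z = x0" "c = k" "z = m"
    and s: "a0 + x0 + b0 + y0 = 2 * M"
  shows False
proof -
  have y: "y = m" using h al by auto
  have x: "x = x0" using al h y by (simp add: min_def)
  have bk: "b > k" using h al y by auto
  have w0: "a0 + x0 + 1 = M" using s al Mk by simp
  have wr: "min a c + min x z + c + z + 1 = 2 * M" using al w0 Mk by simp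
  have Wle: "a + x + b + y \<le> 2 * M + 1" using h(9,8) unfolding Qg_def by auto
  have W: "a + x + b + y = 2 * M \<or> a + x + b + y = 2 * M + 1" using wr Wle h(10) by linarith
  then show False
  proof
    assume W1: "a + x + b + y = 2 * M"
    then have nY: "\<not> Ys m M k a0 x0 b0 y0 a x b y" using h(8,9) unfolding Qg_def by auto
    show False
    proof (cases "a \<le> k")
      case True
      then have "a = a0" using al by (simp add: min_def)
      then have "b = k + 1" using W1 w0 x y Mk by simp
      then show False using nY `a = a0` x y al unfolding Ys_def by simp
    next
      case False
      then have "a0 = k" using al by (simp add: min_def)
      then show False using W1 w0 x y Mk False bk h(1) by linarith
    qed
  next
    assume W2: "a + x + b + y = 2 * M + 1"
    then have "isE m M k a x b y" using h(8,9) unfolding Qg_def by auto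
    then show False using y m2 x al w0 Mk unfolding isE_def by (auto simp: min_def)
  qed
qed

lemma RX_bg:
  assumes h: "a \<le> b" "x \<le> y" "c \<le> b" "z \<le> y" "b \<le> n" "y \<le> m" "c \<noteq> b \<or> z \<noteq> y"
      "a \<noteq> b \<or> x \<noteq> y"
      "Qg (Xs m M k a0 x0 b0 y0) (Ys m M k a0 x0 b0 y0) (isE m M k) (2 * M) a x b y"
      "min a c + min x z + c + z < a + x + b + y"
    and bg: "a0 + 1 = M" "x0 = 0" "(b0 = M \<and> y0 = 1) \<or> (b0 = M + 1 \<and> y0 = 0)"
      "min a c + 1 = M" "min x z = 0" "c = M" "z = 0"
    and s3: "\<not> (M < n \<and> a0 + 1 = M \<and> x0 = 0 \<and> b0 = M \<and> y0 = 1)"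
  shows False
proof -
  have a: "a + 1 = M" using bg by (auto simp: min_def split: if_splits)
  have bM: "b \<ge> M" using h bg by auto
  have W: "a + x + b + y = 2 * M \<or> a + x + b + y = 2 * M + 1" using h(9,8,10) bg unfolding Qg_def by auto
  then show False
  proof
    assume W1: "a + x + b + y = 2 * M"
    then have nY: "\<not> Ys m M k a0 x0 b0 y0 a x b y" using h(8,9) unfolding Qg_def by auto
    have "x + b + y = M + 1" using W1 a by simp
    then have "(b = M \<and> x = 0 \<and> y = 1) \<or> (b = M + 1 \<and> x = 0 \<and> y = 0)" using bM h(2) by auto
    then show False
    proof
      assume "b = M \<and> x = 0 \<and> y = 1"
      then show False using nY a bg unfolding Ys_def by auto
    next
      assume t: "b = M + 1 \<and> x = 0 \<and> y = 0"
      show False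
      proof (cases "b0 = M + 1")
        case True
        then show False using nY a bg t unfolding Ys_def by auto
      next
        case False
        then have "b0 = M" "y0 = 1" using bg by auto
        then have "\<not> M < n" using s3 bg by auto
        then show False using t h(5) by auto
      qed
    qed
  next
    assume W2: "a + x + b + y = 2 * M + 1"
    then have "isE m M k a x b y" using h(8,9) unfolding Qg_def by auto
    then show False using a m2 Mk unfolding isE_def by auto
  qed
qed

lemma QR_restr:
  assumes ord: "a \<le> b" "x \<le> y" "c \<le> b" "z \<le> y" "b \<le> n" "y \<le> m"
    and ps: "PS n m M k a0 x0 b0 y0" and ne: "\<not> isE m M k a0 x0 b0 y0"
    and q1: "Qs m M k a0 x0 b0 y0 a x b y"
  shows "Qs m M k a0 x0 b0 y0 (min a c) (min x z) c z"
proof -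
  have s: "a0 + x0 + b0 + y0 = 2 * M" "a0 \<noteq> b0 \<or> x0 \<noteq> y0" "\<not> (M < n \<and> a0 + 1 = M \<and> x0 = 0 \<and> b0 = M \<and> y0 = 1)"
    using ps ne unfolding PS_def by auto
  have "Qg (Xs m M k a0 x0 b0 y0) (Ys m M k a0 x0 b0 y0) (isE m M k) (2 * M) (min a c) (min x z) c z"
  proof (rule Qg_restr[OF ord])
    show "Qg (Xs m M k a0 x0 b0 y0) (Ys m M k a0 x0 b0 y0) (isE m M k) (2 * M) a x b y" using q1 ne unfolding Qs_def by simp
  next
    fix a x b y c z
    assume h: "a \<le> b" "x \<le> y" "c \<le> b" "z \<le> y" "b \<le> n" "y \<le> m" "c \<noteq> b \<or> z \<noteq> y"
      "a \<noteq> b \<or> x \<noteq> y" "min a c \<noteq> c \<or> min x z \<noteq> z"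
      "Qg (Xs m M k a0 x0 b0 y0) (Ys m M k a0 x0 b0 y0) (isE m M k) (2 * M) a x b y"
      "min a c + min x z + c + z < 2 * M" "Xs m M k a0 x0 b0 y0 (min a c) (min x z) c z"
    have w: "min a c + min x z + c + z < a + x + b + y" using W_restr[of c b z y a x] h by blast
    have "(b0 = k + 1 \<and> y0 = m \<and> a0 \<le> k \<and> min a c = a0 \<and> min x z = x0 \<and> c = k \<and> z = m) \<or>
      (a0 + 1 = M \<and> x0 = 0 \<and> ((b0 = M \<and> y0 = 1) \<or> (b0 = M + 1 \<and> y0 = 0)) \<and>
      min a c + 1 = M \<and> min x z = 0 \<and> c = M \<and> z = 0)"
      using h(12) unfolding Xs_def .
    then show False
    proof
      assume al: "b0 = k + 1 \<and> y0 = m \<and> a0 \<le> k \<and> min a c = a0 \<and> min x z = x0 \<and> c = k \<and> z = m"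
      show False by (rule RX_al[OF h(1-8) h(10) w]) (use al s in auto)
    next
      assume bg: "a0 + 1 = M \<and> x0 = 0 \<and> ((b0 = M \<and> y0 = 1) \<or> (b0 = M + 1 \<and> y0 = 0)) \<and>
        min a c + 1 = M \<and> min x z = 0 \<and> c = M \<and> z = 0"
      show False by (rule RX_bg[OF h(1-8) h(10) w]) (use bg s in auto)
    qed
  next
    fix a x b y c z
    assume h: "a \<le> b" "x \<le> y" "c \<le> b" "z \<le> y" "b \<le> n" "y \<le> m" "c \<noteq> b \<or> z \<noteq> y"
      "min a c \<noteq> c \<or> min x z \<noteq> z" "a + x + b + y = 2 * M + 1" "isE m M k a x b y"
      "min a c + min x z + c + z = 2 * M" "Ys m M k a0 x0 b0 y0 (min a c) (min x z) c z"
    show False by (rule RY_gen[OF h(3,4,7,8,10,11)])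
  qed
  then show ?thesis using ne unfolding Qs_def by simp
qed


lemma Qs_refl: "Qs m M k a0 x0 b0 y0 a x a x" by (simp add: Qs_def Qg_refl)

lemma Qs_not_self: assumes "PS n m M k a0 x0 b0 y0" shows "\<not> Qs m M k a0 x0 b0 y0 a0 x0 b0 y0"
proof (cases "isE m M k a0 x0 b0 y0")
  case True
  then have "a0 + x0 + b0 + y0 = 2 * M + 1" by (rule isE_W)
  moreover have "a0 \<noteq> b0 \<or> x0 \<noteq> y0" using True unfolding isE_def by auto
  ultimately show ?thesis using True unfolding Qs_def Qg_def by auto
next
  case False
  then have "a0 + x0 + b0 + y0 = 2 * M" "a0 \<noteq> b0 \<or> x0 \<noteq> y0" using assms unfolding PS_def by auto
  then show ?thesis using False unfolding Qs_def Qg_def Ys_def by auto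
qed

lemma Qs_mem:
  assumes ps0: "PS n m M k a0 x0 b0 y0" and ps: "PS n m M k a x b y"
    and ne: "\<not> (a = a0 \<and> x = x0 \<and> b = b0 \<and> y = y0)" and bx: "b0 \<le> n"
  shows "Qs m M k a0 x0 b0 y0 a x b y"
proof (cases "isE m M k a x b y")
  case True
  then have "a + x + b + y = 2 * M + 1" by (rule isE_W)
  then show ?thesis using True ne unfolding Qs_def Qg_def by auto
next
  case False
  then have t: "a + x + b + y = 2 * M" "a \<noteq> b \<or> x \<noteq> y" "\<not> (M < n \<and> a + 1 = M \<and> x = 0 \<and> b = M \<and> y = 1)"
    using ps unfolding PS_def by auto
  have Mn: "M \<le> n" using nm nk by simp
  show ?thesis
  proof (cases "isE m M k a0 x0 b0 y0")
    case True
    then show ?thesis using t unfolding Qs_def Qg_def by auto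
  next
    case False
    have "\<not> Ys m M k a0 x0 b0 y0 a x b y"
    proof
      assume "Ys m M k a0 x0 b0 y0 a x b y"
      then have "a0 + 1 = M \<and> x0 = 0 \<and> ((b0 = M \<and> y0 = 1) \<or> (b0 = M + 1 \<and> y0 = 0)) \<and> a + 1 = M \<and> x = 0 \<and> b = M \<and> y = 1"
        using ne unfolding Ys_def by blast
      then show False using t(3) Mn ne bx by auto
    qed
    then show ?thesis using t False unfolding Qs_def Qg_def by auto
  qed
qed

lemma card_LT_PS: "card (LTn n m (PS n m M k)) = card (LTn n m (PR M)) + 2"
proof -
  define Xr :: "(nat \<times> nat \<times> nat \<times> nat) set" where "Xr = (if M < n then {(M - 1, 0, M, 1)} else {})"
  define Eset :: "(nat \<times> nat \<times> nat \<times> nat) set" where "Eset = {(k, m, k + 1, m), (M, 0, M, 1)} \<union> (if M < n then {(M, 0, M + 1, 0)} else {})"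
  have Mn: "M \<le> n" and Mk': "M = m + k" and M1: "M \<ge> 1" using nm nk m2 by auto
  have eq: "LTn n m (PS n m M k) = (LTn n m (PR M) - Xr) \<union> Eset"
  proof (rule Set.set_eqI)
    fix t :: "nat \<times> nat \<times> nat \<times> nat"
    obtain a x b y where t: "t = (a, x, b, y)" by (cases t) auto
    show "t \<in> LTn n m (PS n m M k) \<longleftrightarrow> t \<in> (LTn n m (PR M) - Xr) \<union> Eset"
      unfolding t LTn_def PS_def PR_def Xr_def Eset_def isE_def using Mn Mk' M1 m2 nk
      by (cases "M < n") auto
  qed
  have XrL: "Xr \<subseteq> LTn n m (PR M)" unfolding Xr_def LTn_def PR_def using Mn M1 m2 by auto
  have dis: "(LTn n m (PR M) - Xr) \<inter> Eset = {}" unfolding Eset_def LTn_def PR_def using Mk' m2 by auto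
  have fE: "finite Eset" unfolding Eset_def by auto
  have cE: "card Eset = card Xr + 2"
    unfolding Eset_def Xr_def using m2 by (cases "M < n") (auto simp: card_insert_if)
  have "card (LTn n m (PS n m M k)) = card (LTn n m (PR M) - Xr) + card Eset"
    unfolding eq using dis fE finite_LTn by (simp add: card_Un_disjoint)
  also have "card (LTn n m (PR M) - Xr) = card (LTn n m (PR M)) - card Xr"
    using XrL finite_LTn by (simp add: card_Diff_subset finite_subset)
  also have "card Xr \<le> card (LTn n m (PR M))" using XrL finite_LTn by (simp add: card_mono)
  ultimately show ?thesis using cE by simp
qed

end



locale pqs =
  fixes p q n m :: nat
  assumes pp: "Factorial_Ring.prime p" and qp: "Factorial_Ring.prime q" and pq: "p \<noteq> q"
begin

definition NN :: nat where "NN = p ^ n * q ^ m"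
abbreviation GG where "GG \<equiv> Cpq p q n m"

lemma GG_def: "GG = integer_mod_group NN" by (simp add: Cpq_def NN_def)

lemma NN_pos: "NN > 0" using pp qp by (simp add: NN_def prime_gt_0_nat)

lemma carrier_GG: "carrier GG = {0..<int NN}"
  using NN_pos by (simp add: GG_def carrier_integer_mod_group)

definition dd :: "nat \<Rightarrow> nat \<Rightarrow> nat" where "dd a x = p ^ (n - a) * q ^ (m - x)"

definition Sub :: "nat \<Rightarrow> nat \<Rightarrow> int set" where
  "Sub a x = {z \<in> {0..<int NN}. int (dd a x) dvd z}"

definition ep :: "int set \<Rightarrow> nat" where "ep H = multiplicity p (card H)"
definition eqq :: "int set \<Rightarrow> nat" where "eqq H = multiplicity q (card H)"

lemma cop: "coprime (int p ^ i) (int q ^ j)"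
  using pp qp pq by (simp add: primes_coprime)

lemma dd_mult: "a \<le> n \<Longrightarrow> x \<le> m \<Longrightarrow> dd a x * (p ^ a * q ^ x) = NN"
proof -
  assume "a \<le> n" "x \<le> m"
  then have "p ^ (n - a) * p ^ a = p ^ n" "q ^ (m - x) * q ^ x = q ^ m"
    by (simp_all add: power_add[symmetric])
  moreover have "dd a x * (p ^ a * q ^ x) = (p ^ (n - a) * p ^ a) * (q ^ (m - x) * q ^ x)"
    unfolding dd_def by (simp only: mult_ac)
  ultimately show ?thesis by (simp add: NN_def)
qed

lemma dd_pos: "dd a x > 0" using pp qp by (simp add: dd_def prime_gt_0_nat)

lemma Sub_iff: "z \<in> Sub a x \<longleftrightarrow> 0 \<le> z \<and> z < int NN \<and> int p ^ (n - a) dvd z \<and> int q ^ (m - x) dvd z"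
proof -
  have "int (dd a x) dvd z \<longleftrightarrow> int p ^ (n - a) dvd z \<and> int q ^ (m - x) dvd z"
  proof
    assume "int (dd a x) dvd z"
    then show "int p ^ (n - a) dvd z \<and> int q ^ (m - x) dvd z"
      unfolding dd_def by (auto intro: dvd_mult_left dvd_mult_right)
  next
    assume "int p ^ (n - a) dvd z \<and> int q ^ (m - x) dvd z"
    then show "int (dd a x) dvd z" unfolding dd_def using cop[of "n - a" "m - x"] by (simp add: divides_mult)
  qed
  then show ?thesis unfolding Sub_def by auto
qed

lemma subgroup_mult: assumes "g > 0" "g dvd NN"
  shows "subgroup {z \<in> {0..<int NN}. int g dvd z} GG"
proof -
  have grp: "group GG" unfolding GG_def by (rule group_integer_mod_group)
  have gN: "int g dvd int NN" using assms by simp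
  have NNi: "int NN > 0" using NN_pos by simp
  show ?thesis
  proof (rule group.subgroupI[OF grp])
    show "{z \<in> {0..<int NN}. int g dvd z} \<subseteq> carrier GG" unfolding carrier_GG by blast
    have "0 \<in> {z \<in> {0..<int NN}. int g dvd z}" using NNi by simp
    then show "{z \<in> {0..<int NN}. int g dvd z} \<noteq> {}" by blast
  next
    fix a assume a: "a \<in> {z \<in> {0..<int NN}. int g dvd z}"
    then have "a \<in> carrier GG" unfolding carrier_GG by blast
    then have ac: "a \<in> carrier (integer_mod_group NN)" unfolding GG_def .
    have "inv\<^bsub>GG\<^esub> a = (- a) mod int NN" using inv_integer_mod_group[OF ac] GG_def by simp
    moreover have "int g dvd (- a) mod int NN" using a gN by (intro dvd_mod) auto
    moreover have "0 \<le> (- a) mod int NN" "(- a) mod int NN < int NN" using NNi by auto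
    ultimately show "inv\<^bsub>GG\<^esub> a \<in> {z \<in> {0..<int NN}. int g dvd z}" by simp
  next
    fix a b assume a: "a \<in> {z \<in> {0..<int NN}. int g dvd z}" and b: "b \<in> {z \<in> {0..<int NN}. int g dvd z}"
    have "a \<otimes>\<^bsub>GG\<^esub> b = (a + b) mod int NN" by (simp add: GG_def)
    moreover have "int g dvd (a + b) mod int NN" using a b gN by (intro dvd_mod) auto
    moreover have "0 \<le> (a + b) mod int NN" "(a + b) mod int NN < int NN" using NNi by auto
    ultimately show "a \<otimes>\<^bsub>GG\<^esub> b \<in> {z \<in> {0..<int NN}. int g dvd z}" by simp
  qed
qed

lemma dd_dvd: "a \<le> n \<Longrightarrow> x \<le> m \<Longrightarrow> dd a x dvd NN"
proof -
  assume h: "a \<le> n" "x \<le> m"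
  have "dd a x dvd dd a x * (p ^ a * q ^ x)" by simp
  then show ?thesis using dd_mult[OF h] by simp
qed

lemma Sub_subgroup: "a \<le> n \<Longrightarrow> x \<le> m \<Longrightarrow> subgroup (Sub a x) GG"
  unfolding Sub_def by (rule subgroup_mult[OF dd_pos dd_dvd])

lemma card_Sub: "a \<le> n \<Longrightarrow> x \<le> m \<Longrightarrow> card (Sub a x) = p ^ a * q ^ x"
proof -
  assume h: "a \<le> n" "x \<le> m"
  have "card (Sub a x) = NN div dd a x"
    unfolding Sub_def by (rule card_multiples[OF dd_pos dd_dvd[OF h]])
  also have "\<dots> = p ^ a * q ^ x" using dd_mult[OF h, symmetric] dd_pos[of a x] by simp
  finally show ?thesis .
qed

lemma mult_p: "multiplicity p (p ^ a * q ^ x) = a"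
proof -
  have "\<not> p dvd q ^ x" using pp qp pq prime_dvd_power[OF pp, of q x] primes_dvd_imp_eq[OF pp qp] by blast
  then have "multiplicity p (q ^ x * p ^ a) = multiplicity p (p ^ a)"
    using pp by (intro multiplicity_prime_elem_times_other) auto
  then show ?thesis using pp by (simp add: mult.commute)
qed

lemma mult_q: "multiplicity q (p ^ a * q ^ x) = x"
proof -
  have "\<not> q dvd p ^ a" using pp qp pq prime_dvd_power[OF qp, of p a] primes_dvd_imp_eq[OF qp pp] by blast
  then have "multiplicity q (p ^ a * q ^ x) = multiplicity q (q ^ x)"
    using qp by (intro multiplicity_prime_elem_times_other) auto
  then show ?thesis using qp by simp
qed

lemma ep_Sub: "a \<le> n \<Longrightarrow> x \<le> m \<Longrightarrow> ep (Sub a x) = a"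
  by (simp add: ep_def card_Sub mult_p)
lemma eq_Sub: "a \<le> n \<Longrightarrow> x \<le> m \<Longrightarrow> eqq (Sub a x) = x"
  by (simp add: eqq_def card_Sub mult_q)

lemma Sub_inj: "a \<le> n \<Longrightarrow> x \<le> m \<Longrightarrow> b \<le> n \<Longrightarrow> y \<le> m \<Longrightarrow> Sub a x = Sub b y \<longleftrightarrow> a = b \<and> x = y"
  by (metis ep_Sub eq_Sub)

lemma subgroup_Sub: assumes "subgroup H GG" shows "\<exists>a x. a \<le> n \<and> x \<le> m \<and> H = Sub a x"
proof -
  obtain g where g: "g > 0" "g dvd NN" "H = {z \<in> {0..<int NN}. int g dvd z}"
    using subgroup_imod[OF NN_pos] assms unfolding GG_def by blast
  obtain u v where uv: "g = u * v" "u dvd p ^ n" "v dvd q ^ m"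
    using division_decomp[of g "p ^ n" "q ^ m"] g(2) unfolding NN_def by blast
  obtain i where i: "i \<le> n" "u = p ^ i" using uv(2) pp divides_primepow_nat by auto
  obtain j where j: "j \<le> m" "v = q ^ j" using uv(3) qp divides_primepow_nat by auto
  have "dd (n - i) (m - j) = g" using i j uv by (simp add: dd_def)
  then have "H = Sub (n - i) (m - j)" using g by (simp add: Sub_def)
  then show ?thesis by (metis diff_le_self)
qed

lemma Sub_Int: "Sub a x \<inter> Sub b y = Sub (min a b) (min x y)"
proof -
  have pw: "(w ^ (k - min a b) dvd z) \<longleftrightarrow> (w ^ (k - a) dvd z \<and> w ^ (k - b) dvd z)" for w z :: int and k a b :: nat
  proof (cases "a \<le> b")
    case True
    then have "w ^ (k - b) dvd w ^ (k - a)" by (intro le_imp_power_dvd) auto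
    then show ?thesis using True by (auto simp: min_def intro: dvd_trans)
  next
    case False
    then have "w ^ (k - a) dvd w ^ (k - b)" by (intro le_imp_power_dvd) auto
    then show ?thesis using False by (auto simp: min_def intro: dvd_trans)
  qed
  show ?thesis
  proof (rule Set.set_eqI)
    fix z
    show "z \<in> Sub a x \<inter> Sub b y \<longleftrightarrow> z \<in> Sub (min a b) (min x y)"
      unfolding Int_iff Sub_iff pw[of "int p" n a b z] pw[of "int q" m x y z] by blast
  qed
qed

lemma Sub_le: assumes "a \<le> n" "x \<le> m" "b \<le> n" "y \<le> m"
  shows "Sub a x \<subseteq> Sub b y \<longleftrightarrow> a \<le> b \<and> x \<le> y"
proof
  assume "Sub a x \<subseteq> Sub b y"
  then have "Sub a x \<inter> Sub b y = Sub a x" by blast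
  then have "Sub (min a b) (min x y) = Sub a x" using Sub_Int[of a x b y] by simp
  then have "min a b = a \<and> min x y = x" using assms by (subst (asm) Sub_inj) auto
  then show "a \<le> b \<and> x \<le> y" by (simp add: min_def split: if_splits)
next
  assume "a \<le> b \<and> x \<le> y"
  then have "Sub a x \<inter> Sub b y = Sub a x" using Sub_Int[of a x b y] by (simp add: min_def)
  then show "Sub a x \<subseteq> Sub b y" by auto
qed

definition TQ :: "(nat \<Rightarrow> nat \<Rightarrow> nat \<Rightarrow> nat \<Rightarrow> bool) \<Rightarrow> (int set \<times> int set) set" where
  "TQ Q = {(H, K). subgroup H GG \<and> subgroup K GG \<and> H \<subseteq> K \<and> Q (ep H) (eqq H) (ep K) (eqq K)}"

lemma TQ_Sub: "a \<le> n \<Longrightarrow> x \<le> m \<Longrightarrow> b \<le> n \<Longrightarrow> y \<le> m \<Longrightarrow>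
  (Sub a x, Sub b y) \<in> TQ Q \<longleftrightarrow> a \<le> b \<and> x \<le> y \<and> Q a x b y"
  by (simp add: TQ_def Sub_subgroup Sub_le ep_Sub eq_Sub)

lemma arrow_cases:
  assumes "t \<in> arrows GG"
  obtains a x b y where "a \<le> n" "x \<le> m" "b \<le> n" "y \<le> m" "a \<le> b" "x \<le> y" "t = (Sub a x, Sub b y)"
proof -
  obtain H K where t: "t = (H, K)" "subgroup H GG" "subgroup K GG" "H \<subseteq> K"
    using assms unfolding arrows_def by auto
  obtain a x where "a \<le> n" "x \<le> m" "H = Sub a x" using subgroup_Sub t by blast
  moreover obtain b y where "b \<le> n" "y \<le> m" "K = Sub b y" using subgroup_Sub t by blast
  ultimately show ?thesis using that t Sub_le by auto
qed

lemma arrow_cases2: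
  assumes "(H, K) \<in> arrows GG"
  obtains a x b y where "a \<le> n" "x \<le> m" "b \<le> n" "y \<le> m" "a \<le> b" "x \<le> y" "H = Sub a x" "K = Sub b y"
proof -
  obtain a x b y where "a \<le> n" "x \<le> m" "b \<le> n" "y \<le> m" "a \<le> b" "x \<le> y" "(H, K) = (Sub a x, Sub b y)"
    using arrow_cases[OF assms] by blast
  then show ?thesis using that by blast
qed

lemma TQ_ts:
  assumes refl: "\<And>a x. a \<le> n \<Longrightarrow> x \<le> m \<Longrightarrow> Q a x a x"
    and comp: "\<And>a x b y c z. a \<le> b \<Longrightarrow> b \<le> c \<Longrightarrow> x \<le> y \<Longrightarrow> y \<le> z \<Longrightarrow> c \<le> n \<Longrightarrow> z \<le> m \<Longrightarrow>
                  Q a x b y \<Longrightarrow> Q b y c z \<Longrightarrow> Q a x c z"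
    and restr: "\<And>a x b y c z. a \<le> b \<Longrightarrow> x \<le> y \<Longrightarrow> b \<le> n \<Longrightarrow> y \<le> m \<Longrightarrow> c \<le> b \<Longrightarrow> z \<le> y \<Longrightarrow>
                  Q a x b y \<Longrightarrow> Q (min a c) (min x z) c z"
  shows "is_transfer_system GG (TQ Q)"
  unfolding is_transfer_system_def
proof (intro conjI allI impI)
  show "TQ Q \<subseteq> arrows GG" by (auto simp: TQ_def arrows_def)
next
  fix H assume "subgroup H GG"
  then obtain a x where "a \<le> n" "x \<le> m" "H = Sub a x" using subgroup_Sub by blast
  then show "(H, H) \<in> TQ Q" using refl by (simp add: TQ_Sub)
next
  fix H K L assume h: "(H, K) \<in> TQ Q \<and> (K, L) \<in> TQ Q"
  then have h1: "(H, K) \<in> arrows GG" and h2: "(K, L) \<in> arrows GG" by (auto simp: TQ_def arrows_def)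
  obtain a x b y where ab: "a \<le> n" "x \<le> m" "b \<le> n" "y \<le> m" "a \<le> b" "x \<le> y" "H = Sub a x" "K = Sub b y"
    using h1 by (rule arrow_cases2)
  obtain b' y' c z where bc: "b' \<le> n" "y' \<le> m" "c \<le> n" "z \<le> m" "b' \<le> c" "y' \<le> z" "K = Sub b' y'" "L = Sub c z"
    using h2 by (rule arrow_cases2)
  have "b' = b \<and> y' = y" using Sub_inj[OF bc(1,2) ab(3,4)] ab(8) bc(7) by simp
  then have bc': "b \<le> c" "y \<le> z" "K = Sub b y" using bc by auto
  have q1: "Q a x b y" using h ab by (simp add: TQ_Sub)
  have q2: "Q b y c z" using h bc' bc ab by (simp add: TQ_Sub)
  have "Q a x c z" by (rule comp[OF ab(5) bc'(1) ab(6) bc'(2) bc(3) bc(4) q1 q2])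
  then show "(H, L) \<in> TQ Q" using ab bc bc' by (simp add: TQ_Sub)
next
  fix H K g assume h: "(H, K) \<in> TQ Q \<and> g \<in> carrier GG"
  then have "H \<subseteq> carrier GG" "K \<subseteq> carrier GG" by (auto simp: TQ_def dest: subgroup.subset)
  moreover have "comm_group GG" by (simp add: GG_def)
  ultimately show "(conjset GG g H, conjset GG g K) \<in> TQ Q" using h by (simp add: conjset_comm)
next
  fix H K L assume h: "(H, K) \<in> TQ Q \<and> subgroup L GG \<and> L \<subseteq> K"
  then have "(H, K) \<in> arrows GG" by (auto simp: TQ_def arrows_def)
  then obtain a x b y where ab: "a \<le> n" "x \<le> m" "b \<le> n" "y \<le> m" "a \<le> b" "x \<le> y"
    "H = Sub a x" "K = Sub b y" by (rule arrow_cases2)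
  obtain c z where c: "c \<le> n" "z \<le> m" "L = Sub c z" using subgroup_Sub h by blast
  have cb: "c \<le> b \<and> z \<le> y" using Sub_le[OF c(1,2) ab(3,4)] h ab c by simp
  have q: "Q a x b y" using h ab by (simp add: TQ_Sub)
  have "Q (min a c) (min x z) c z" using restr[OF ab(5) ab(6) ab(3) ab(4) _ _ q] cb by blast
  moreover have "H \<inter> L = Sub (min a c) (min x z)" using ab c Sub_Int by simp
  ultimately show "(H \<inter> L, L) \<in> TQ Q" using ab c by (simp add: TQ_Sub)
qed

end



context pqs
begin

lemma TQ_image: "TQ P = (\<lambda>(a, x, b, y). (Sub a x, Sub b y)) ` LTn n m P"
proof (rule Set.set_eqI)
  fix t
  show "t \<in> TQ P \<longleftrightarrow> t \<in> (\<lambda>(a, x, b, y). (Sub a x, Sub b y)) ` LTn n m P"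
  proof
    assume t: "t \<in> TQ P"
    then have "t \<in> arrows GG" unfolding TQ_def arrows_def by auto
    then obtain a x b y where ab: "a \<le> n" "x \<le> m" "b \<le> n" "y \<le> m" "a \<le> b" "x \<le> y" "t = (Sub a x, Sub b y)"
      by (rule arrow_cases)
    then have "P a x b y" using t TQ_Sub by auto
    then have "(a, x, b, y) \<in> LTn n m P" using ab unfolding LTn_def by auto
    then show "t \<in> (\<lambda>(a, x, b, y). (Sub a x, Sub b y)) ` LTn n m P" using ab by force
  next
    assume "t \<in> (\<lambda>(a, x, b, y). (Sub a x, Sub b y)) ` LTn n m P"
    then obtain a x b y where "(a, x, b, y) \<in> LTn n m P" "t = (Sub a x, Sub b y)" by auto
    then show "t \<in> TQ P" unfolding LTn_def by (auto simp: TQ_Sub)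
  qed
qed

lemma card_TQ: "card (TQ P) = card (LTn n m P)"
proof -
  have "inj_on (\<lambda>(a, x, b, y). (Sub a x, Sub b y)) (LTn n m P)"
  proof (rule inj_onI)
    fix u v assume u: "u \<in> LTn n m P" and v: "v \<in> LTn n m P"
      and e: "(\<lambda>(a, x, b, y). (Sub a x, Sub b y)) u = (\<lambda>(a, x, b, y). (Sub a x, Sub b y)) v"
    obtain a x b y where uu: "u = (a, x, b, y)" by (cases u) auto
    obtain a' x' b' y' where vv: "v = (a', x', b', y')" by (cases v) auto
    have bx: "a \<le> n" "x \<le> m" "b \<le> n" "y \<le> m" "a' \<le> n" "x' \<le> m" "b' \<le> n" "y' \<le> m"
      using u v uu vv unfolding LTn_def by auto
    have "Sub a x = Sub a' x'" "Sub b y = Sub b' y'" using e uu vv by auto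
    then show "u = v" using Sub_inj bx uu vv by auto
  qed
  then show ?thesis by (simp add: TQ_image card_image)
qed

lemma R_mid_TQ: "R_mid p q n m (n + m) = TQ (\<lambda>a x b y. (a \<noteq> b \<or> x \<noteq> y) \<and> a + x + b + y = n + m)"
proof (rule Set.set_eqI)
  fix t
  show "t \<in> R_mid p q n m (n + m) \<longleftrightarrow> t \<in> TQ (\<lambda>a x b y. (a \<noteq> b \<or> x \<noteq> y) \<and> a + x + b + y = n + m)"
  proof (cases "t \<in> arrows GG")
    case True
    then obtain a x b y where ab: "a \<le> n" "x \<le> m" "b \<le> n" "y \<le> m" "a \<le> b" "x \<le> y" "t = (Sub a x, Sub b y)"
      by (rule arrow_cases)
    have tm: "twice_midpoint p q t = a + x + b + y"
      using ab ep_Sub eq_Sub unfolding twice_midpoint_def ep_def eqq_def by simp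
    have "Sub a x \<noteq> Sub b y \<longleftrightarrow> (a \<noteq> b \<or> x \<noteq> y)" using Sub_inj ab by auto
    then show ?thesis using ab tm True unfolding R_mid_def by (auto simp: TQ_Sub)
  next
    case False
    then show ?thesis unfolding R_mid_def TQ_def arrows_def by auto
  qed
qed

end

theorem lemma7p4:
  fixes p q n m :: nat
  assumes "Factorial_Ring.prime p" and "Factorial_Ring.prime q" and "p \<noteq> q"
    and "m \<ge> 2" and "n \<ge> m" and "even (n + m)"
  shows "\<exists>S. S \<subseteq> arrows (Cpq p q n m) \<and> (\<forall>(H, K)\<in>S. H \<noteq> K) \<and>
             minimal_generating_set (Cpq p q n m) S \<and>
             card S = card (R_mid p q n m (n + m)) + 2"
proof -
  interpret pqs p q n m using assms(1-3) by unfold_locales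
  have "even (n + m - 2 * m)" using assms(6) by (intro dvd_diff_nat) auto
  moreover have "n + m - 2 * m = n - m" by simp
  ultimately have "even (n - m)" by simp
  then obtain k where k: "n - m = 2 * k" by (rule evenE)
  define M where "M = m + k"
  have nk: "n = m + 2 * k" using k assms(5) by simp
  have nm: "n + m = 2 * M" using nk M_def by simp
  interpret L: latt n m M k using nm nk assms(4) by unfold_locales
  define S where "S = TQ (PS n m M k)"
  have Sarr: "S \<subseteq> arrows GG" unfolding S_def TQ_def arrows_def by auto
  have Scases: "\<exists>a x b y. a \<le> n \<and> x \<le> m \<and> b \<le> n \<and> y \<le> m \<and> a \<le> b \<and> x \<le> y \<and> t = (Sub a x, Sub b y) \<and> PS n m M k a x b y"
    if "t \<in> S" for t
  proof -
    have "t \<in> arrows GG" using that Sarr by auto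
    then obtain a x b y where ab: "a \<le> n" "x \<le> m" "b \<le> n" "y \<le> m" "a \<le> b" "x \<le> y" "t = (Sub a x, Sub b y)"
      by (rule arrow_cases)
    then have "PS n m M k a x b y" using that unfolding S_def by (simp add: TQ_Sub)
    then show ?thesis using ab by blast
  qed
  have PS_nonid: "a \<noteq> b \<or> x \<noteq> y" if "PS n m M k a x b y" for a x b y
    using that unfolding PS_def isE_def by auto
  have nonid: "\<forall>(H, K)\<in>S. H \<noteq> K"
  proof
    fix t assume "t \<in> S"
    then obtain a x b y where ab: "a \<le> n" "x \<le> m" "b \<le> n" "y \<le> m" "t = (Sub a x, Sub b y)" "PS n m M k a x b y"
      using Scases by blast
    have "Sub a x \<noteq> Sub b y" using Sub_inj[OF ab(1-4)] PS_nonid[OF ab(6)] by simp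
    then show "case t of (H, K) \<Rightarrow> H \<noteq> K" using ab(5) by simp
  qed
  have minimal: "minimal_generating_set GG S"
    unfolding minimal_generating_set_def
  proof
    fix s assume sS: "s \<in> S"
    then obtain a0 x0 b0 y0 where s0: "a0 \<le> n" "x0 \<le> m" "b0 \<le> n" "y0 \<le> m" "a0 \<le> b0" "x0 \<le> y0"
      "s = (Sub a0 x0, Sub b0 y0)" "PS n m M k a0 x0 b0 y0"
      using Scases by blast
    define T where "T = TQ (Qs m M k a0 x0 b0 y0)"
    have ts: "is_transfer_system GG T" unfolding T_def
    proof (rule TQ_ts)
      show "Qs m M k a0 x0 b0 y0 a x a x" for a x by (rule L.Qs_refl)
    next
      fix a x b y c z
      assume h: "a \<le> b" "b \<le> c" "x \<le> y" "y \<le> z" "c \<le> n" "z \<le> m"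
        "Qs m M k a0 x0 b0 y0 a x b y" "Qs m M k a0 x0 b0 y0 b y c z"
      show "Qs m M k a0 x0 b0 y0 a x c z"
      proof (cases "isE m M k a0 x0 b0 y0")
        case True show ?thesis by (rule L.QE_comp[OF h(1-6) True h(7,8)])
      next
        case False show ?thesis by (rule L.QR_comp[OF h(1-6) s0(8) False h(7,8)])
      qed
    next
      fix a x b y c z
      assume h: "a \<le> b" "x \<le> y" "b \<le> n" "y \<le> m" "c \<le> b" "z \<le> y" "Qs m M k a0 x0 b0 y0 a x b y"
      show "Qs m M k a0 x0 b0 y0 (min a c) (min x z) c z"
      proof (cases "isE m M k a0 x0 b0 y0")
        case True show ?thesis by (rule L.QE_restr[OF h(1,2,5,6,3,4) True h(7)])
      next
        case False show ?thesis by (rule L.QR_restr[OF h(1,2,5,6,3,4) s0(8) False h(7)])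
      qed
    qed
    have sub: "S - {s} \<subseteq> T"
    proof
      fix t assume t: "t \<in> S - {s}"
      then obtain a x b y where ab: "a \<le> n" "x \<le> m" "b \<le> n" "y \<le> m" "a \<le> b" "x \<le> y"
        "t = (Sub a x, Sub b y)" "PS n m M k a x b y"
        using Scases by blast
      have "\<not> (a = a0 \<and> x = x0 \<and> b = b0 \<and> y = y0)" using t ab s0 by auto
      then have "Qs m M k a0 x0 b0 y0 a x b y" using L.Qs_mem[OF s0(8) ab(8) _ s0(3)] by blast
      then show "t \<in> T" unfolding T_def using ab by (simp add: TQ_Sub)
    qed
    have notin: "s \<notin> T" unfolding T_def using s0 L.Qs_not_self[OF s0(8)] by (simp add: TQ_Sub)
    have "s \<notin> generated_ts GG (S - {s})" unfolding generated_ts_def using ts sub notin by blast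
    moreover have "s \<in> generated_ts GG S" unfolding generated_ts_def using sS by blast
    ultimately show "generated_ts GG (S - {s}) \<noteq> generated_ts GG S" by blast
  qed
  have "card S = card (LTn n m (PS n m M k))" unfolding S_def by (rule card_TQ)
  also have "\<dots> = card (LTn n m (PR M)) + 2" by (rule L.card_LT_PS)
  also have "LTn n m (PR M) = LTn n m (\<lambda>a x b y. (a \<noteq> b \<or> x \<noteq> y) \<and> a + x + b + y = n + m)"
    unfolding PR_def nm ..
  also have "card \<dots> = card (R_mid p q n m (n + m))" by (simp add: R_mid_TQ card_TQ)
  finally have "card S = card (R_mid p q n m (n + m)) + 2" .
  then show ?thesis using Sarr nonid minimal by blast
qed


end
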